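(* Let $k\ge 3$. Then $\chi_\rho(S^2_{P_k})=3$ if $k=3$, and $\chi_\rho(S^2_{P_k})=4$ if $k\ge 4$.
   Context: $P_k$ is the path with vertex set $[k]=\{0,\dots,k-1\}$ and edges $\{i,i+1\}$, $0\le i\le k-2$. For a graph $G$ with vertex set $[k]$ and $n\ge 1$, the generalized Sierpi\'nski graph $S^n_G$ has vertex set $[k]^n$, and $u=u_1\cdots u_n$, $v=v_1\cdots v_n$ are adjacent iff there is $i$ with: $u_j=v_j$ for $j<i$; $u_i\neq v_i$ and $u_iv_i\in E(G)$; and $u_j=v_i$, $v_j=u_i$ for all $j>i$. A packing $c$-coloring of a graph $X$ is a map $f:V(X)\to\{1,\dots,c\}$ such that any two distinct vertices $u,v$ with $f(u)=f(v)=i$ satisfy $d_X(u,v)>i$; the packing chromatic number $\chi_\rho(X)$ is the least such $c$. *)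

theory Defs
  imports "HOL-Library.Extended_Nat"
begin

definition path_graph_adj :: "nat \<Rightarrow> nat \<Rightarrow> bool" where
  "path_graph_adj i j \<longleftrightarrow> j = i + 1 \<or> i = j + 1"

definition path_vertices :: "nat \<Rightarrow> nat set" where
  "path_vertices k = {0..<k}"

(* Generalized Sierpinski graph S^n_G for G on [k] with adjacency E:
   vertex set [k]^n, words as lists of length n (positions 0..n-1). *)
definition sierp_vertices :: "nat \<Rightarrow> nat \<Rightarrow> nat list set" where
  "sierp_vertices k n = {u. length u = n \<and> (\<forall>x\<in>set u. x < k)}"

definition sierp_adj :: "(nat \<Rightarrow> nat \<Rightarrow> bool) \<Rightarrow> nat list \<Rightarrow> nat list \<Rightarrow> bool" where
  "sierp_adj E u v \<longleftrightarrow> length u = length v \<and>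
     (\<exists>i < length u. (\<forall>j < i. u ! j = v ! j) \<and> u ! i \<noteq> v ! i \<and> E (u ! i) (v ! i) \<and>
        (\<forall>j. i < j \<and> j < length u \<longrightarrow> u ! j = v ! i \<and> v ! j = u ! i))"

definition is_walk :: "'a set \<Rightarrow> ('a \<Rightarrow> 'a \<Rightarrow> bool) \<Rightarrow> 'a list \<Rightarrow> bool" where
  "is_walk V adj xs \<longleftrightarrow> xs \<noteq> [] \<and> set xs \<subseteq> V \<and>
     (\<forall>i. Suc i < length xs \<longrightarrow> adj (xs ! i) (xs ! Suc i))"

(* graph distance; \<infinity> if no walk exists *)
definition gdist :: "'a set \<Rightarrow> ('a \<Rightarrow> 'a \<Rightarrow> bool) \<Rightarrow> 'a \<Rightarrow> 'a \<Rightarrow> enat" where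
  "gdist V adj u v = (INF xs \<in> {xs. is_walk V adj xs \<and> hd xs = u \<and> last xs = v}.
                        enat (length xs - 1))"

definition packing_coloring :: "'a set \<Rightarrow> ('a \<Rightarrow> 'a \<Rightarrow> bool) \<Rightarrow> nat \<Rightarrow> ('a \<Rightarrow> nat) \<Rightarrow> bool" where
  "packing_coloring V adj c f \<longleftrightarrow>
     (\<forall>u\<in>V. f u \<in> {1..c}) \<and>
     (\<forall>u\<in>V. \<forall>v\<in>V. u \<noteq> v \<and> f u = f v \<longrightarrow> gdist V adj u v > enat (f u))"

definition packing_chromatic_number :: "'a set \<Rightarrow> ('a \<Rightarrow> 'a \<Rightarrow> bool) \<Rightarrow> nat" where
  "packing_chromatic_number V adj = (LEAST c. \<exists>f. packing_coloring V adj c f)"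

end

theory Submission
  imports Defs
begin

lemma adj2: "sierp_adj path_graph_adj [a,x] [b,y] \<longleftrightarrow>
   (a \<noteq> b \<and> path_graph_adj a b \<and> x = b \<and> y = a) \<or> (a = b \<and> path_graph_adj x y)"
proof
  assume "sierp_adj path_graph_adj [a,x] [b,y]"
  then show "(a \<noteq> b \<and> path_graph_adj a b \<and> x = b \<and> y = a) \<or> (a = b \<and> path_graph_adj x y)"
  proof -
    obtain i where i: "i < 2" "(\<forall>j < i. [a,x] ! j = [b,y] ! j)" "[a,x] ! i \<noteq> [b,y] ! i"
       "path_graph_adj ([a,x] ! i) ([b,y] ! i)"
       "(\<forall>j. i < j \<and> j < 2 \<longrightarrow> [a,x] ! j = [b,y] ! i \<and> [b,y] ! j = [a,x] ! i)"
      using \<open>sierp_adj path_graph_adj [a,x] [b,y]\<close> unfolding sierp_adj_def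
      by (metis length_Cons list.size(3) numeral_2_eq_2)
    show ?thesis
    proof (cases "i = 0")
      case True
      then have "[a,x] ! 1 = [b,y] ! 0 \<and> [b,y] ! 1 = [a,x] ! 0" using i(5) by auto
      then show ?thesis using i(3,4) True by simp
    next
      case False
      then have "i = 1" using i(1) by simp
      then have "[a,x] ! 0 = [b,y] ! 0" using i(2) by blast
      then show ?thesis using i(3,4) \<open>i = 1\<close> by simp
    qed
  qed
next
  assume h: "(a \<noteq> b \<and> path_graph_adj a b \<and> x = b \<and> y = a) \<or> (a = b \<and> path_graph_adj x y)"
  show "sierp_adj path_graph_adj [a,x] [b,y]"
  proof (cases "a = b")
    case True
    with h have "path_graph_adj x y" "x \<noteq> y" by (auto simp: path_graph_adj_def)
    have "\<forall>j. 1 < j \<and> j < length [a,x] \<longrightarrow> [a,x]!j = [b,y]!1 \<and> [b,y]!j = [a,x]!1"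
      by simp
    moreover have "\<forall>j<1. [a,x]!j = [b,y]!j" using True by simp
    ultimately show ?thesis using True \<open>path_graph_adj x y\<close> \<open>x \<noteq> y\<close> unfolding sierp_adj_def
      apply (intro conjI)
       apply simp
      apply (rule exI[of _ 1])
      by simp
  next
    case False
    with h have hh: "a \<noteq> b" "path_graph_adj a b" "x = b" "y = a" by auto
    have "\<forall>j. 0 < j \<and> j < length [a,x] \<longrightarrow> [a,x]!j = [b,y]!0 \<and> [b,y]!j = [a,x]!0"
    proof (intro allI impI)
      fix j assume "0 < j \<and> j < length [a,x]"
      then have "j = 1" by simp
      then show "[a,x]!j = [b,y]!0 \<and> [b,y]!j = [a,x]!0" using hh by simp
    qed
    then show ?thesis unfolding sierp_adj_def
      apply (intro conjI)
       apply simp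
      apply (rule exI[of _ 0])
      using hh by simp
  qed
qed

lemma V2: "u \<in> sierp_vertices k 2 \<longleftrightarrow> (\<exists>a x. u = [a,x] \<and> a < k \<and> x < k)"
proof
  assume "u \<in> sierp_vertices k 2"
  then have "length u = 2" "\<forall>z\<in>set u. z < k" by (auto simp: sierp_vertices_def)
  then show "\<exists>a x. u = [a,x] \<and> a < k \<and> x < k"
    by (cases u; cases "tl u"; auto)
qed (auto simp: sierp_vertices_def)

lemma is_walk_single[simp]: "is_walk V adj [x] \<longleftrightarrow> x \<in> V"
  by (auto simp: is_walk_def)

lemma is_walk_Cons2[simp]: "is_walk V adj (x#y#xs) \<longleftrightarrow> x \<in> V \<and> adj x y \<and> is_walk V adj (y#xs)"
proof
  assume h: "is_walk V adj (x#y#xs)"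
  then have "adj x y" unfolding is_walk_def by (metis length_Cons nth_Cons_0 nth_Cons_Suc zero_less_Suc Suc_less_eq)
  moreover have "is_walk V adj (y#xs)" using h unfolding is_walk_def
    by auto
  ultimately show "x \<in> V \<and> adj x y \<and> is_walk V adj (y#xs)" using h by (auto simp: is_walk_def)
next
  assume h: "x \<in> V \<and> adj x y \<and> is_walk V adj (y#xs)"
  show "is_walk V adj (x#y#xs)" unfolding is_walk_def
  proof (intro conjI allI impI)
    fix i assume "Suc i < length (x#y#xs)"
    then show "adj ((x#y#xs) ! i) ((x#y#xs) ! Suc i)" using h
      by (cases i) (auto simp: is_walk_def)
  qed (use h in \<open>auto simp: is_walk_def\<close>)
qed

lemma gdist_le_walk:
  assumes "is_walk V adj xs" "hd xs = u" "last xs = v"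
  shows "gdist V adj u v \<le> enat (length xs - 1)"
  unfolding gdist_def using assms by (intro INF_lower) auto

lemma walk_phi:
  assumes lip: "\<And>v w. v \<in> V \<Longrightarrow> w \<in> V \<Longrightarrow> adj v w \<Longrightarrow> \<phi> w \<le> \<phi> v + (1::int)"
  shows "is_walk V adj xs \<Longrightarrow> \<phi> (last xs) \<le> \<phi> (hd xs) + int (length xs - 1)"
proof (induction xs)
  case Nil then show ?case by (simp add: is_walk_def)
next
  case (Cons x xs)
  show ?case
  proof (cases xs)
    case Nil then show ?thesis by simp
  next
    case (Cons y ys)
    have w: "x \<in> V" "adj x y" "is_walk V adj (y#ys)" using Cons.prems Cons by auto
    then have "y \<in> V" by (simp add: is_walk_def)
    have "\<phi> (last xs) \<le> \<phi> y + int (length xs - 1)" using Cons.IH w Cons by simp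
    moreover have "\<phi> y \<le> \<phi> x + 1" using lip w \<open>y \<in> V\<close> by blast
    ultimately show ?thesis using Cons by simp
  qed
qed

lemma gdist_ge:
  assumes lip: "\<And>v w. v \<in> V \<Longrightarrow> w \<in> V \<Longrightarrow> adj v w \<Longrightarrow> \<phi> w \<le> \<phi> v + (1::int)"
  shows "enat (nat (\<phi> v - \<phi> u)) \<le> gdist V adj u v"
  unfolding gdist_def
proof (rule INF_greatest)
  fix xs assume "xs \<in> {xs. is_walk V adj xs \<and> hd xs = u \<and> last xs = v}"
  then have "is_walk V adj xs" "hd xs = u" "last xs = v" by auto
  then have "\<phi> v \<le> \<phi> u + int (length xs - 1)" using walk_phi[of V adj \<phi> xs] lip by metis
  then have "nat (\<phi> v - \<phi> u) \<le> length xs - 1" by linarith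
  then show "enat (nat (\<phi> v - \<phi> u)) \<le> enat (length xs - 1)" by simp
qed

definition Dd :: "nat \<Rightarrow> nat \<Rightarrow> nat \<Rightarrow> nat \<Rightarrow> int" where
  "Dd a x b y = (if a = b then \<bar>int x - int y\<bar>
     else if a < b then \<bar>int x - int a - 1\<bar> + 3 * (int b - int a) - 2 + \<bar>int y - int b + 1\<bar>
     else \<bar>int y - int b - 1\<bar> + 3 * (int a - int b) - 2 + \<bar>int x - int a + 1\<bar>)"

lemma Dd_l1: "Dd a x b (Suc y) \<le> Dd a x b y + 1 \<and> Dd a x b y \<le> Dd a x b (Suc y) + 1"
proof -
  consider "a = b" | "a < b" | "b < a" by linarith
  then show ?thesis
  proof cases
    case 1 then show ?thesis by (simp add: Dd_def; arith)
  next
    case 2 then show ?thesis by (simp add: Dd_def; arith)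
  next
    case 3 then show ?thesis by (simp add: Dd_def; arith)
  qed
qed

lemma Dd_l2: "Dd a x (Suc b) b \<le> Dd a x b (Suc b) + 1 \<and> Dd a x b (Suc b) \<le> Dd a x (Suc b) b + 1"
proof -
  consider "a = b" | "a = Suc b" | "a < b" | "Suc b < a" by linarith
  then show ?thesis
  proof cases
    case 1 then show ?thesis by (simp add: Dd_def; arith)
  next
    case 2 then show ?thesis by (simp add: Dd_def)
  next
    case 3 then show ?thesis by (simp add: Dd_def; arith)
  next
    case 4 then show ?thesis by (simp add: Dd_def; arith)
  qed
qed

lemma Dd_lip:
  assumes "sierp_adj path_graph_adj [b,y] [c,z]"
  shows "Dd a x c z \<le> Dd a x b y + 1"
  using assms unfolding adj2 path_graph_adj_def
  using Dd_l1 Dd_l2 by auto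

lemma Dd_self: "Dd a x a x = 0" by (simp add: Dd_def)

definition phiD :: "nat list \<Rightarrow> nat list \<Rightarrow> int" where
  "phiD u v = Dd (u!0) (u!1) (v!0) (v!1)"

lemma gdist_Dd:
  assumes "a < k" "x < k" "b < k" "y < k"
  shows "enat (nat (Dd a x b y)) \<le> gdist (sierp_vertices k 2) (sierp_adj path_graph_adj) [a,x] [b,y]"
proof -
  have "enat (nat (phiD [a,x] [b,y] - phiD [a,x] [a,x])) \<le> gdist (sierp_vertices k 2) (sierp_adj path_graph_adj) [a,x] [b,y]"
  proof (rule gdist_ge)
    fix v w assume "v \<in> sierp_vertices k 2" "w \<in> sierp_vertices k 2" "sierp_adj path_graph_adj v w"
    then show "phiD [a,x] w \<le> phiD [a,x] v + 1"
      unfolding V2 phiD_def using Dd_lip by auto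
  qed
  then show ?thesis by (simp add: phiD_def Dd_self)
qed

lemma Dd_sym: "Dd a x b y = Dd b y a x"
  unfolding Dd_def by auto

lemma sep2: "even (x::nat) \<Longrightarrow> even y \<Longrightarrow> x = y \<or> x + 2 \<le> y \<or> y + 2 \<le> x"
  by (elim evenE) auto

lemma sep4: "(x::nat) mod 4 = y mod 4 \<Longrightarrow> x = y \<or> x + 4 \<le> y \<or> y + 4 \<le> x"
proof -
  assume h: "x mod 4 = y mod 4"
  have "x = 4 * (x div 4) + x mod 4" "y = 4 * (y div 4) + y mod 4" by simp_all
  moreover have "x mod 4 < 4" by simp
  moreover have "x div 4 = y div 4 \<or> x div 4 + 1 \<le> y div 4 \<or> y div 4 + 1 \<le> x div 4" by linarith
  ultimately show ?thesis using h by linarith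
qed

lemma cases_ab: "(a::nat) \<le> b \<Longrightarrow> b = a \<or> b = a + 1 \<or> a + 2 \<le> b" by linarith

lemma c1: assumes "a \<le> b" "even x" "even y" "(a,x) \<noteq> (b,y)" shows "1 < Dd a x b y"
proof -
  have s: "x = y \<or> x + 2 \<le> y \<or> y + 2 \<le> x" using sep2 assms by blast
  consider "b = a" | "b = a + 1" | "a + 2 \<le> b" using cases_ab[OF assms(1)] by blast
  then show ?thesis
  proof cases
    case 1 then show ?thesis using s assms(4) by (simp add: Dd_def; arith)
  next
    case 2 then show ?thesis using s by (simp add: Dd_def; arith)
  next
    case 3 then show ?thesis by (simp add: Dd_def; arith)
  qed
qed

lemma c23: assumes "a \<le> b" "x mod 4 = y mod 4" "x \<noteq> a" "y \<noteq> b" "(a,x) \<noteq> (b,y)" shows "3 < Dd a x b y"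
proof -
  have s: "x = y \<or> x + 4 \<le> y \<or> y + 4 \<le> x" using sep4 assms by blast
  consider "b = a" | "b = a + 1" | "a + 2 \<le> b" using cases_ab[OF assms(1)] by blast
  then show ?thesis
  proof cases
    case 1 then show ?thesis using s assms(5) by (simp add: Dd_def; arith)
  next
    case 2 then show ?thesis using s assms(3,4) by (simp add: Dd_def; arith)
  next
    case 3 then show ?thesis by (simp add: Dd_def; arith)
  qed
qed

lemma c4: assumes "a \<le> b" "odd a" "odd b" "a \<noteq> b" shows "4 < Dd a a b b"
proof -
  have "a + 2 \<le> b" using assms by (elim oddE) auto
  then show ?thesis by (simp add: Dd_def; arith)
qed

lemma comb:
  fixes a0 a1 a2 a3 b0 b1 b2 b3 :: nat
  assumes "a2 = a1 \<longrightarrow> a2 < 1" "a2 = a3 \<longrightarrow> a2 < 1" "a2 = b1 \<longrightarrow> a2 < 1"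
    "a1 = a3 \<longrightarrow> a1 < 2" "a1 = b1 \<longrightarrow> a1 < 2" "a3 = b1 \<longrightarrow> a3 < 2"
    "b1 = b0 \<longrightarrow> b1 < 1" "b1 = b2 \<longrightarrow> b1 < 1" "b0 = b2 \<longrightarrow> b0 < 2" "b0 = a2 \<longrightarrow> b0 < 2"
    "b2 = a2 \<longrightarrow> b2 < 2" "a0 = a1 \<longrightarrow> a0 < 1" "a0 = a2 \<longrightarrow> a0 < 2" "a0 = b1 \<longrightarrow> a0 < 3"
    "b3 = b2 \<longrightarrow> b3 < 1" "b3 = b1 \<longrightarrow> b3 < 2" "b3 = a2 \<longrightarrow> b3 < 3"
    "1 \<le> a0 \<and> a0 \<le> 3" "1 \<le> a1 \<and> a1 \<le> 3" "1 \<le> a2 \<and> a2 \<le> 3" "1 \<le> a3 \<and> a3 \<le> 3"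
    "1 \<le> b0 \<and> b0 \<le> 3" "1 \<le> b1 \<and> b1 \<le> 3" "1 \<le> b2 \<and> b2 \<le> 3" "1 \<le> b3 \<and> b3 \<le> 3"
  shows False
proof -
  note h = assms
  have v: "x = 1 \<or> x = 2 \<or> x = 3" if "1 \<le> x \<and> x \<le> (3::nat)" for x using that by auto
  have a0: "a0 = 1 \<or> a0 = 2 \<or> a0 = 3" using v h(18) by blast
  have a1: "a1 = 1 \<or> a1 = 2 \<or> a1 = 3" using v h(19) by blast
  have a2: "a2 = 1 \<or> a2 = 2 \<or> a2 = 3" using v h(20) by blast
  have a3: "a3 = 1 \<or> a3 = 2 \<or> a3 = 3" using v h(21) by blast
  have b0: "b0 = 1 \<or> b0 = 2 \<or> b0 = 3" using v h(22) by blast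
  have b1: "b1 = 1 \<or> b1 = 2 \<or> b1 = 3" using v h(23) by blast
  have b2: "b2 = 1 \<or> b2 = 2 \<or> b2 = 3" using v h(24) by blast
  have b3: "b3 = 1 \<or> b3 = 2 \<or> b3 = 3" using v h(25) by blast
  have r: "a2 \<noteq> 1" using h(1-6) a1 a2 a3 b1 by auto
  have s: "b1 \<noteq> 1" using h(7-11) h(3) a2 b0 b1 b2 by auto
  have t1: "b0 = 1" using r s h(3) h(7) h(10) a2 b1 b0 by auto
  have t2: "b2 = 1" using r s h(3) h(8) h(11) a2 b1 b2 by auto
  have t3: "a1 = 1" using r s h(3) h(1) h(5) a2 b1 a1 by auto
  have t4: "a3 = 1" using r s h(3) h(2) h(6) a2 b1 a3 by auto
  show False using r s t1 t2 t3 t4 h(3) h(12-17) a0 a2 b1 b3 by auto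
qed
lemma c1': assumes "even x" "even y" "(a,x) \<noteq> (b,y)" shows "1 < Dd a x b y"
proof (cases "a \<le> b")
  case True then show ?thesis using c1 assms by blast
next
  case False then show ?thesis using c1[of b a y x] assms Dd_sym by auto
qed

lemma c23': assumes "x mod 4 = y mod 4" "x \<noteq> a" "y \<noteq> b" "(a,x) \<noteq> (b,y)" shows "3 < Dd a x b y"
proof (cases "a \<le> b")
  case True then show ?thesis using c23 assms by blast
next
  case False then show ?thesis using c23[of b a y x] assms Dd_sym by auto
qed

lemma c4': assumes "odd a" "odd b" "a \<noteq> b" shows "4 < Dd a a b b"
proof (cases "a \<le> b")
  case True then show ?thesis using c4 assms by blast
next
  case False then show ?thesis using c4[of b a] assms Dd_sym by auto
qed

lemma mod4_odd:
  assumes "odd (y::nat)" shows "y mod 4 = 1 \<or> y mod 4 = 3"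
proof -
  have e: "y = 4 * (y div 4) + y mod 4" by simp
  have "y mod 4 < 4" by simp
  moreover have "y mod 4 \<noteq> 0"
  proof
    assume "y mod 4 = 0"
    then have "y = 2 * (2 * (y div 4))" using e by simp
    then show False using assms by (metis dvd_triv_left)
  qed
  moreover have "y mod 4 \<noteq> 2"
  proof
    assume "y mod 4 = 2"
    then have "y = 2 * (2 * (y div 4) + 1)" using e by simp
    then show False using assms by (metis dvd_triv_left)
  qed
  ultimately show ?thesis by linarith
qed

definition col :: "nat \<Rightarrow> nat list \<Rightarrow> nat" where
  "col k u = (if even (u!1) then 1 else if u!1 = u!0 then (if k = 3 then 3 else 4)
              else if u!1 mod 4 = 1 then 2 else 3)"

lemma col_Dd:
  assumes "k \<ge> 3" "x < k" "y < k" "(a,x) \<noteq> (b,y)" "col k [a,x] = col k [b,y]"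
  shows "int (col k [a,x]) < Dd a x b y"
proof (cases "even x")
  case True
  then have "even y" using assms(5) by (auto simp: col_def split: if_splits)
  then show ?thesis using c1'[OF True] assms(4) True by (simp add: col_def)
next
  case ox: False
  show ?thesis
  proof (cases "x = a")
    case True
    show ?thesis
    proof (cases "odd y \<and> y = b")
      case True
      with \<open>x = a\<close> ox assms(4) have "4 < Dd a x b y" using c4'[of a b] by auto
      then show ?thesis using \<open>x = a\<close> ox by (simp add: col_def)
    next
      case False
      then have "k = 3" "odd y" "y mod 4 \<noteq> 1" using assms(5) \<open>x = a\<close> ox by (auto simp: col_def split: if_splits)
      then have "y mod 4 = 3" using mod4_odd by blast
      have "y \<ge> 3"
      proof (rule ccontr)
        assume "\<not> 3 \<le> y"
        then have "y mod 4 = y" by (intro mod_less) linarith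
        with \<open>y mod 4 = 3\<close> \<open>\<not> 3 \<le> y\<close> show False by simp
      qed
      then show ?thesis using \<open>k = 3\<close> assms(3) by linarith
    qed
  next
    case xa: False
    have x1: "x = 1" if "k = 3"
    proof -
      have "x < 3" using assms(2) that by simp
      then have "x = 0 \<or> x = 1 \<or> x = 2" by auto
      then show ?thesis using ox by auto
    qed
    have oy: "odd y" "y \<noteq> b" using assms(5) ox xa x1 by (auto simp: col_def split: if_splits)
    have "x mod 4 = y mod 4"
    proof (cases "x mod 4 = 1")
      case True then show ?thesis using assms(5) ox xa oy by (auto simp: col_def split: if_splits)
    next
      case False
      then have "x mod 4 = 3" using ox mod4_odd by blast
      moreover have "y mod 4 \<noteq> 1" using assms(5) ox xa oy False by (auto simp: col_def split: if_splits)
      then have "y mod 4 = 3" using oy mod4_odd by blast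
      ultimately show ?thesis by simp
    qed
    then have "3 < Dd a x b y" using c23' xa oy assms(4) by blast
    moreover have "col k [a,x] \<le> 3" using ox xa by (simp add: col_def)
    ultimately show ?thesis by linarith
  qed
qed

lemma col_valid:
  assumes "k \<ge> 3"
  shows "packing_coloring (sierp_vertices k 2) (sierp_adj path_graph_adj) (if k = 3 then 3 else 4) (col k)"
  unfolding packing_coloring_def
proof (intro conjI ballI impI)
  fix u assume "u \<in> sierp_vertices k 2"
  show "col k u \<in> {1..(if k = 3 then 3 else 4)}" by (simp add: col_def)
next
  fix u v assume uv: "u \<in> sierp_vertices k 2" "v \<in> sierp_vertices k 2" "u \<noteq> v \<and> col k u = col k v"
  then obtain a x b y where ab: "u = [a,x]" "v = [b,y]" "a < k" "x < k" "b < k" "y < k"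
    unfolding V2 by blast
  then have "int (col k [a,x]) < Dd a x b y" using col_Dd[OF assms, of x y a b] uv by auto
  then have "enat (col k u) < enat (nat (Dd a x b y))" using ab by simp
  also have "\<dots> \<le> gdist (sierp_vertices k 2) (sierp_adj path_graph_adj) u v"
    using gdist_Dd ab by simp
  finally show "enat (col k u) < gdist (sierp_vertices k 2) (sierp_adj path_graph_adj) u v" .
qed

lemma walk_cons:
  assumes "packing_coloring V adj c f" "is_walk V adj xs" "hd xs \<noteq> last xs" "f (hd xs) = f (last xs)"
  shows "f (hd xs) < length xs - 1"
proof -
  have "hd xs \<in> V" "last xs \<in> V" using assms(2) unfolding is_walk_def by auto
  then have "enat (f (hd xs)) < gdist V adj (hd xs) (last xs)"
    using assms(1,3,4) unfolding packing_coloring_def by blast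
  also have "\<dots> \<le> enat (length xs - 1)" using gdist_le_walk[OF assms(2)] by simp
  finally show ?thesis by simp
qed

lemma col_range: "packing_coloring V adj c f \<Longrightarrow> u \<in> V \<Longrightarrow> 1 \<le> f u \<and> f u \<le> c"
  unfolding packing_coloring_def by auto

lemma lower4:
  assumes "k \<ge> 4" "packing_coloring (sierp_vertices k 2) (sierp_adj path_graph_adj) c f" "c \<le> 3"
  shows False
proof -
  let ?V = "sierp_vertices k 2"
  have mem: "[a,x] \<in> ?V" if "a < 4" "x < 4" for a x using that assms(1) by (simp add: sierp_vertices_def)
  note W = walk_cons[OF assms(2)]
  have r: "1 \<le> f [a,x] \<and> f [a,x] \<le> 3" if "a < 4" "x < 4" for a x
    using col_range[OF assms(2) mem[OF that]] assms(3) by simp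
  note S = adj2 path_graph_adj_def mem
  have 1: "f [1,2] = f [1,1] \<longrightarrow> f [1,2] < 1" using W[of "[[1,2],[1,1]]"] by (auto simp: S)
  have 2: "f [1,2] = f [1,3] \<longrightarrow> f [1,2] < 1" using W[of "[[1,2],[1,3]]"] by (auto simp: S)
  have 3: "f [1,2] = f [2,1] \<longrightarrow> f [1,2] < 1" using W[of "[[1,2],[2,1]]"] by (auto simp: S)
  have 4: "f [1,1] = f [1,3] \<longrightarrow> f [1,1] < 2" using W[of "[[1,1],[1,2],[1,3]]"] by (auto simp: S)
  have 5: "f [1,1] = f [2,1] \<longrightarrow> f [1,1] < 2" using W[of "[[1,1],[1,2],[2,1]]"] by (auto simp: S)
  have 6: "f [1,3] = f [2,1] \<longrightarrow> f [1,3] < 2" using W[of "[[1,3],[1,2],[2,1]]"] by (auto simp: S)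
  have 7: "f [2,1] = f [2,0] \<longrightarrow> f [2,1] < 1" using W[of "[[2,1],[2,0]]"] by (auto simp: S)
  have 8: "f [2,1] = f [2,2] \<longrightarrow> f [2,1] < 1" using W[of "[[2,1],[2,2]]"] by (auto simp: S)
  have 9: "f [2,0] = f [2,2] \<longrightarrow> f [2,0] < 2" using W[of "[[2,0],[2,1],[2,2]]"] by (auto simp: S)
  have 10: "f [2,0] = f [1,2] \<longrightarrow> f [2,0] < 2" using W[of "[[2,0],[2,1],[1,2]]"] by (auto simp: S)
  have 11: "f [2,2] = f [1,2] \<longrightarrow> f [2,2] < 2" using W[of "[[2,2],[2,1],[1,2]]"] by (auto simp: S)
  have 12: "f [1,0] = f [1,1] \<longrightarrow> f [1,0] < 1" using W[of "[[1,0],[1,1]]"] by (auto simp: S)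
  have 13: "f [1,0] = f [1,2] \<longrightarrow> f [1,0] < 2" using W[of "[[1,0],[1,1],[1,2]]"] by (auto simp: S)
  have 14: "f [1,0] = f [2,1] \<longrightarrow> f [1,0] < 3" using W[of "[[1,0],[1,1],[1,2],[2,1]]"] by (auto simp: S)
  have 15: "f [2,3] = f [2,2] \<longrightarrow> f [2,3] < 1" using W[of "[[2,3],[2,2]]"] by (auto simp: S)
  have 16: "f [2,3] = f [2,1] \<longrightarrow> f [2,3] < 2" using W[of "[[2,3],[2,2],[2,1]]"] by (auto simp: S)
  have 17: "f [2,3] = f [1,2] \<longrightarrow> f [2,3] < 3" using W[of "[[2,3],[2,2],[2,1],[1,2]]"] by (auto simp: S)
  have R0: "1 \<le> f [1,0] \<and> f [1,0] \<le> 3" by (rule r) simp_all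
  have R1: "1 \<le> f [1,1] \<and> f [1,1] \<le> 3" by (rule r) simp_all
  have R2: "1 \<le> f [1,2] \<and> f [1,2] \<le> 3" by (rule r) simp_all
  have R3: "1 \<le> f [1,3] \<and> f [1,3] \<le> 3" by (rule r) simp_all
  have R4: "1 \<le> f [2,0] \<and> f [2,0] \<le> 3" by (rule r) simp_all
  have R5: "1 \<le> f [2,1] \<and> f [2,1] \<le> 3" by (rule r) simp_all
  have R6: "1 \<le> f [2,2] \<and> f [2,2] \<le> 3" by (rule r) simp_all
  have R7: "1 \<le> f [2,3] \<and> f [2,3] \<le> 3" by (rule r) simp_all
  show False by (rule comb[OF 1 2 3 4 5 6 7 8 9 10 11 12 13 14 15 16 17 R0 R1 R2 R3 R4 R5 R6 R7])
qed


lemma comb3: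
  fixes p0 p1 p2 p3 :: nat
  assumes "p0 = p1 \<longrightarrow> p0 < 1" "p1 = p2 \<longrightarrow> p1 < 1" "p2 = p3 \<longrightarrow> p2 < 1"
    "p0 = p2 \<longrightarrow> p0 < 2" "p1 = p3 \<longrightarrow> p1 < 2"
    "1 \<le> p0 \<and> p0 \<le> 2" "1 \<le> p1 \<and> p1 \<le> 2" "1 \<le> p2 \<and> p2 \<le> 2" "1 \<le> p3 \<and> p3 \<le> 2"
  shows False
  using assms by presburger

lemma lower3:
  assumes "k \<ge> 3" "packing_coloring (sierp_vertices k 2) (sierp_adj path_graph_adj) c f" "c \<le> 2"
  shows False
proof -
  let ?V = "sierp_vertices k 2"
  have mem: "[a,x] \<in> ?V" if "a < 3" "x < 3" for a x using that assms(1) by (simp add: sierp_vertices_def)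
  note W = walk_cons[OF assms(2)]
  have r: "1 \<le> f [a,x] \<and> f [a,x] \<le> 2" if "a < 3" "x < 3" for a x
    using col_range[OF assms(2) mem[OF that]] assms(3) by simp
  note S = adj2 path_graph_adj_def mem
  have 1: "f [0,0] = f [0,1] \<longrightarrow> f [0,0] < 1" using W[of "[[0,0],[0,1]]"] by (auto simp: S)
  have 2: "f [0,1] = f [1,0] \<longrightarrow> f [0,1] < 1" using W[of "[[0,1],[1,0]]"] by (auto simp: S)
  have 3: "f [1,0] = f [1,1] \<longrightarrow> f [1,0] < 1" using W[of "[[1,0],[1,1]]"] by (auto simp: S)
  have 4: "f [0,0] = f [1,0] \<longrightarrow> f [0,0] < 2" using W[of "[[0,0],[0,1],[1,0]]"] by (auto simp: S)
  have 5: "f [0,1] = f [1,1] \<longrightarrow> f [0,1] < 2" using W[of "[[0,1],[1,0],[1,1]]"] by (auto simp: S)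
  have R0: "1 \<le> f [0,0] \<and> f [0,0] \<le> 2" by (rule r) simp_all
  have R1: "1 \<le> f [0,1] \<and> f [0,1] \<le> 2" by (rule r) simp_all
  have R2: "1 \<le> f [1,0] \<and> f [1,0] \<le> 2" by (rule r) simp_all
  have R3: "1 \<le> f [1,1] \<and> f [1,1] \<le> 2" by (rule r) simp_all
  show False by (rule comb3[OF 1 2 3 4 5 R0 R1 R2 R3])
qed

theorem proposition3:
  fixes k :: nat
  assumes "k \<ge> 3"
  shows "packing_chromatic_number (sierp_vertices k 2) (sierp_adj path_graph_adj)
           = (if k = 3 then 3 else 4)"
  unfolding packing_chromatic_number_def
proof (rule Least_equality)
  show "\<exists>f. packing_coloring (sierp_vertices k 2) (sierp_adj path_graph_adj) (if k = 3 then 3 else 4) f"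
    using col_valid[OF assms] by blast
next
  fix c assume "\<exists>f. packing_coloring (sierp_vertices k 2) (sierp_adj path_graph_adj) c f"
  then obtain f where f: "packing_coloring (sierp_vertices k 2) (sierp_adj path_graph_adj) c f" by blast
  show "(if k = 3 then 3 else 4) \<le> c"
  proof (rule ccontr)
    assume "\<not> (if k = 3 then 3 else 4) \<le> c"
    then show False
    proof (cases "k = 3")
      case True
      then show False using lower3[OF assms f] \<open>\<not> (if k = 3 then 3 else 4) \<le> c\<close> by simp
    next
      case False
      then have "k \<ge> 4" using assms by simp
      then show False using lower4[OF _ f] False \<open>\<not> (if k = 3 then 3 else 4) \<le> c\<close> by simp
    qed
  qed
qed

end
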